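(* Suppose that for every finite graph $G=(V,E)$, every ferromagnetic pair interactions $\mathbf J$ on $G$, every $k\in\mathbb N$, every $j_1,\dots,j_{2k}\in V$ (not necessarily distinct) and every $u_0v_0\in E$ with $v_0\notin\{j_1,\dots,j_{2k}\}$, one has $(-1)^{k-1}\partial u_{2k}(\sigma_{j_1},\dots,\sigma_{j_{2k}})/\partial J_{u_0v_0}\ge0$. Then for every finite graph $G$, every ferromagnetic $\mathbf J$ on $G$, every $k\in\mathbb N$, every $j_1,\dots,j_{2k}\in V$ and every $u_0v_0\in E$ with $u_0\in\{j_1,\dots,j_{2k}\}$ and $v_0\in\{j_1,\dots,j_{2k}\}$, one also has $$(-1)^{k-1}\frac{\partial u_{2k}(\sigma_{j_1},\dots,\sigma_{j_{2k}})}{\partial J_{u_0v_0}}\ge0.$$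
   Context: Ferromagnetic pair interactions: $\mathbf J=(J_e)_{e\in E}$ with $J_e\ge0$. Ising model: $\mathbb P_G(\sigma)=\exp[\sum_{uv\in E}J_{uv}\sigma_u\sigma_v]/Z_G$ on $\{-1,1\}^V$, expectation $\langle\cdot\rangle_G$. Ursell function: $u_m(\sigma_{j_1},\dots,\sigma_{j_m})=\sum_{\mathscr P}(-1)^{|\mathscr P|-1}(|\mathscr P|-1)!\prod_{P\in\mathscr P}\langle\prod_{i\in P}\sigma_{j_i}\rangle_G$, the sum over all set partitions $\mathscr P$ of $\{1,\dots,m\}$; it is regarded as a function of $\mathbf J$. *)

theory Defs
  imports "HOL-Analysis.Analysis" "HOL-Library.Disjoint_Sets" "HOL-Library.FuncSet"
begin

definition finite_graph :: "nat set \<Rightarrow> nat set set \<Rightarrow> bool" where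
  "finite_graph V E \<longleftrightarrow> finite V \<and> (\<forall>e\<in>E. e \<subseteq> V \<and> card e = 2)"

definition ferromagnetic :: "nat set set \<Rightarrow> (nat set \<Rightarrow> real) \<Rightarrow> bool" where
  "ferromagnetic E J \<longleftrightarrow> (\<forall>e\<in>E. J e \<ge> 0)"

definition configs :: "nat set \<Rightarrow> (nat \<Rightarrow> real) set" where
  "configs V = (V \<rightarrow>\<^sub>E {-1, 1})"

definition ising_weight :: "nat set set \<Rightarrow> (nat set \<Rightarrow> real) \<Rightarrow> (nat \<Rightarrow> real) \<Rightarrow> real" where
  "ising_weight E J \<sigma> = exp (\<Sum>e\<in>E. J e * (\<Prod>v\<in>e. \<sigma> v))"

definition partition_fn :: "nat set \<Rightarrow> nat set set \<Rightarrow> (nat set \<Rightarrow> real) \<Rightarrow> real" where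
  "partition_fn V E J = (\<Sum>\<sigma>\<in>configs V. ising_weight E J \<sigma>)"

definition ising_expect :: "nat set \<Rightarrow> nat set set \<Rightarrow> (nat set \<Rightarrow> real) \<Rightarrow> ((nat \<Rightarrow> real) \<Rightarrow> real) \<Rightarrow> real" where
  "ising_expect V E J f = (\<Sum>\<sigma>\<in>configs V. f \<sigma> * ising_weight E J \<sigma>) / partition_fn V E J"

text \<open>Ursell function u_m(\<sigma>_{j 0},...,\<sigma>_{j (m-1)}), sum over set partitions of {0..<m}.\<close>
definition ursell :: "nat set \<Rightarrow> nat set set \<Rightarrow> (nat set \<Rightarrow> real) \<Rightarrow> nat \<Rightarrow> (nat \<Rightarrow> nat) \<Rightarrow> real" where
  "ursell V E J m j =
     (\<Sum>P\<in>{P. partition_on {0..<m} P}.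
        (-1) ^ (card P - 1) * fact (card P - 1) *
        (\<Prod>B\<in>P. ising_expect V E J (\<lambda>\<sigma>. \<Prod>i\<in>B. \<sigma> (j i))))"

definition ursell_deriv :: "nat set \<Rightarrow> nat set set \<Rightarrow> (nat set \<Rightarrow> real) \<Rightarrow> nat \<Rightarrow> (nat \<Rightarrow> nat) \<Rightarrow> nat set \<Rightarrow> real" where
  "ursell_deriv V E J m j e0 = deriv (\<lambda>t. ursell V E (J(e0 := t)) m j) (J e0)"

end

theory Submission imports Defs "HOL-Real_Asymp.Real_Asymp" begin

lemma expect_ignore:
  assumes "vw \<notin> E"
  shows "ising_expect V E (J(vw:=a)) f = ising_expect V E J f"
proof -
  have "ising_weight E (J(vw:=a)) = ising_weight E J"
    unfolding ising_weight_def using assms by (intro ext arg_cong[where f=exp] sum.cong) auto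
  thus ?thesis unfolding ising_expect_def partition_fn_def by simp
qed

lemma configs_finite: "finite V \<Longrightarrow> finite (configs V)"
  unfolding configs_def by (intro finite_PiE) auto

lemma partition_pos: "finite V \<Longrightarrow> partition_fn V E J > 0"
proof -
  assume fV: "finite V"
  have "(\<lambda>v\<in>V. 1::real) \<in> configs V" unfolding configs_def by auto
  hence "configs V \<noteq> {}" by auto
  thus ?thesis unfolding partition_fn_def ising_weight_def
    using configs_finite[OF fV] by (intro sum_pos) auto
qed

lemma upd_deriv: "((\<lambda>s. (J(e0:=s)) e) has_real_derivative (if e = e0 then 1 else 0)) (at x)"
  by (cases "e = e0") (auto intro!: derivative_eq_intros)

lemma expect_diff:
  assumes "finite V"
  shows "\<exists>D. ((\<lambda>s. ising_expect V E (J(e0:=s)) f) has_real_derivative D) (at x)"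
  unfolding ising_expect_def partition_fn_def ising_weight_def
  apply (rule exI)
  apply (rule derivative_eq_intros DERIV_sum upd_deriv refl | assumption)+
  using partition_pos[OF assms, of E "J(e0:=x)"] unfolding partition_fn_def ising_weight_def
   apply simp
  apply (rule refl)
  done


lemma sum_configs_insert:
  assumes "w \<notin> V" "finite V"
  shows "(\<Sum>\<sigma>\<in>configs (insert w V). h \<sigma>) = (\<Sum>g\<in>configs V. \<Sum>y\<in>{-1,1::real}. h (g(w:=y)))"
proof -
  have "(\<Sum>\<sigma>\<in>configs (insert w V). h \<sigma>) = (\<Sum>p\<in>{-1,1::real} \<times> configs V. h ((\<lambda>(y, g). g(w := y)) p))"
    unfolding configs_def PiE_insert_eq
    by (subst sum.reindex) (use inj_combinator[OF assms(1), of "\<lambda>_. {-1,1::real}"] in auto)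
  also have "\<dots> = (\<Sum>y\<in>{-1,1::real}. \<Sum>g\<in>configs V. h (g(w:=y)))"
    unfolding sum.cartesian_product by (simp add: case_prod_unfold)
  also have "\<dots> = (\<Sum>g\<in>configs V. \<Sum>y\<in>{-1,1::real}. h (g(w:=y)))"
    by (rule sum.swap)
  finally show ?thesis .
qed

definition cfac :: "nat \<Rightarrow> real \<Rightarrow> real" where
  "cfac n a = (exp a + (-1)^n * exp (-a)) / (exp a + exp (-a))"

lemma inner_sum:
  assumes "s \<in> {-1,1::real}"
  shows "(\<Sum>y\<in>{-1,1::real}. (y * s) ^ n * exp (a * (s * y))) = exp a + (-1)^n * exp (-a)"
  using assms by auto

lemma num_factor:
  assumes wV: "w \<notin> V" and fV: "finite V" and v0: "v0 \<in> V"
    and EV: "\<forall>e\<in>E. e \<subseteq> V" and vwE: "{v0,w} \<notin> E" and fE: "finite E"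
    and Ja: "J {v0,w} = a" and jB: "\<forall>i\<in>B. j i \<in> V" and fB: "finite B"
  shows "(\<Sum>\<sigma>\<in>configs (insert w V). (\<Prod>i\<in>B. \<sigma> (if j i = v0 then w else j i)) * ising_weight (insert {v0,w} E) J \<sigma>)
     = (exp a + (-1)^(card {i\<in>B. j i = v0}) * exp (-a)) * (\<Sum>g\<in>configs V. (\<Prod>i\<in>B. g (j i)) * ising_weight E J g)"
proof -
  define n where "n = card {i\<in>B. j i = v0}"
  have vw: "v0 \<noteq> w" using wV v0 by auto
  have key: "(\<Prod>i\<in>B. (g(w:=y)) (if j i = v0 then w else j i)) * ising_weight (insert {v0,w} E) J (g(w:=y))
     = ((y * g v0)^n * exp (a * (g v0 * y))) * ((\<Prod>i\<in>B. g (j i)) * ising_weight E J g)"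
    if g: "g \<in> configs V" for g y
  proof -
    have "g v0 \<in> {-1,1}" using g v0 unfolding configs_def by auto
    hence gv: "g v0 * g v0 = 1" by auto
    have p1: "(\<Prod>i\<in>B. (g(w:=y)) (if j i = v0 then w else j i)) = (\<Prod>i\<in>B. g (j i) * (if j i = v0 then y * g v0 else 1))"
      using jB wV gv by (intro prod.cong) (auto simp: mult.assoc[symmetric])
    also have "\<dots> = (\<Prod>i\<in>B. g (j i)) * (y * g v0)^n"
      unfolding prod.distrib n_def using fB by (simp add: prod.inter_filter[symmetric])
    finally have p1: "(\<Prod>i\<in>B. (g(w:=y)) (if j i = v0 then w else j i)) = (\<Prod>i\<in>B. g (j i)) * (y * g v0)^n" .
    have "(\<Sum>e\<in>insert {v0,w} E. J e * (\<Prod>v\<in>e. (g(w:=y)) v)) = a * (g v0 * y) + (\<Sum>e\<in>E. J e * (\<Prod>v\<in>e. g v))"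
    proof -
      have "(\<Sum>e\<in>E. J e * (\<Prod>v\<in>e. (g(w:=y)) v)) = (\<Sum>e\<in>E. J e * (\<Prod>v\<in>e. g v))"
        using EV wV by (intro sum.cong refl arg_cong2[where f="(*)"] prod.cong) auto
      thus ?thesis using vwE fE vw Ja by simp
    qed
    hence "ising_weight (insert {v0,w} E) J (g(w:=y)) = exp (a * (g v0 * y)) * ising_weight E J g"
      unfolding ising_weight_def by (simp add: exp_add)
    thus ?thesis using p1 by simp
  qed
  have "(\<Sum>\<sigma>\<in>configs (insert w V). (\<Prod>i\<in>B. \<sigma> (if j i = v0 then w else j i)) * ising_weight (insert {v0,w} E) J \<sigma>)
     = (\<Sum>g\<in>configs V. \<Sum>y\<in>{-1,1::real}. ((y * g v0)^n * exp (a * (g v0 * y))) * ((\<Prod>i\<in>B. g (j i)) * ising_weight E J g))"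
    unfolding sum_configs_insert[OF wV fV] using key by (intro sum.cong refl) auto
  also have "\<dots> = (\<Sum>g\<in>configs V. (exp a + (-1)^n * exp (-a)) * ((\<Prod>i\<in>B. g (j i)) * ising_weight E J g))"
  proof (intro sum.cong refl)
    fix g assume g: "g \<in> configs V"
    have "g v0 \<in> {-1,1}" using g v0 unfolding configs_def by auto
    note I = inner_sum[OF this, of n a]
    show "(\<Sum>y\<in>{-1,1::real}. ((y * g v0)^n * exp (a * (g v0 * y))) * ((\<Prod>i\<in>B. g (j i)) * ising_weight E J g))
      = (exp a + (-1)^n * exp (-a)) * ((\<Prod>i\<in>B. g (j i)) * ising_weight E J g)"
      unfolding sum_distrib_right[symmetric] I ..
  qed
  finally show ?thesis unfolding n_def by (simp add: sum_distrib_left)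
qed

lemma expect_factor:
  assumes wV: "w \<notin> V" and fV: "finite V" and v0: "v0 \<in> V"
    and EV: "\<forall>e\<in>E. e \<subseteq> V" and vwE: "{v0,w} \<notin> E" and fE: "finite E"
    and Ja: "J {v0,w} = a" and jB: "\<forall>i\<in>B. j i \<in> V" and fB: "finite B"
  shows "ising_expect (insert w V) (insert {v0,w} E) J (\<lambda>\<sigma>. \<Prod>i\<in>B. \<sigma> (if j i = v0 then w else j i))
     = cfac (card {i\<in>B. j i = v0}) a * ising_expect V E J (\<lambda>\<sigma>. \<Prod>i\<in>B. \<sigma> (j i))"
proof -
  have N: ?thesis if "True"
    using num_factor[of w V v0 E J a B j] num_factor[of w V v0 E J a "{}" j] assms
    unfolding ising_expect_def partition_fn_def cfac_def by simp
  thus ?thesis by simp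
qed

lemma cfac_lim: "((\<lambda>a. cfac n a) \<longlongrightarrow> 1) at_top"
proof (cases "even n")
  case True
  have "cfac n = (\<lambda>_. 1)" unfolding cfac_def using True
    by (auto simp: fun_eq_iff) (metis add_pos_pos exp_gt_zero less_irrefl)
  thus ?thesis by simp
next
  case False
  hence "cfac n = (\<lambda>a. (exp a - exp (-a)) / (exp a + exp (-a)))" unfolding cfac_def by (auto simp: fun_eq_iff)
  thus ?thesis by (simp only:) real_asymp
qed


theorem mainTheorem11:
  assumes hyp: "\<forall>V E J k j u0 v0.
      finite_graph V E \<and> ferromagnetic E J \<and> k \<ge> 1 \<and> (\<forall>i<2*k. j i \<in> V) \<and>
      {u0, v0} \<in> E \<and> v0 \<notin> j ` {0..<2*k}
      \<longrightarrow> (-1) ^ (k - 1) * ursell_deriv V E J (2*k) j {u0, v0} \<ge> 0"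
  shows "\<forall>V E J k j u0 v0.
      finite_graph V E \<and> ferromagnetic E J \<and> k \<ge> 1 \<and> (\<forall>i<2*k. j i \<in> V) \<and>
      {u0, v0} \<in> E \<and> u0 \<in> j ` {0..<2*k} \<and> v0 \<in> j ` {0..<2*k}
      \<longrightarrow> (-1) ^ (k - 1) * ursell_deriv V E J (2*k) j {u0, v0} \<ge> (0::real)"
proof (intro allI impI)
  fix V :: "nat set" and E :: "nat set set" and J :: "nat set \<Rightarrow> real" and k :: nat and j :: "nat \<Rightarrow> nat" and u0 v0 :: nat
  assume A: "finite_graph V E \<and> ferromagnetic E J \<and> k \<ge> 1 \<and> (\<forall>i<2*k. j i \<in> V) \<and>
      {u0, v0} \<in> E \<and> u0 \<in> j ` {0..<2*k} \<and> v0 \<in> j ` {0..<2*k}"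
  define m where "m = 2*k"
  define e0 where "e0 = {u0, v0}"
  have fV: "finite V" and EV: "\<forall>e\<in>E. e \<subseteq> V" and cE: "\<forall>e\<in>E. card e = 2"
    using A unfolding finite_graph_def by auto
  have fE: "finite E" using EV fV by (meson finite_Pow_iff finite_subset subsetI PowI)
  have e0E: "e0 \<in> E" using A e0_def by auto
  have v0V: "v0 \<in> V" "u0 \<in> V" using EV e0E e0_def by auto
  have jV: "\<forall>i<m. j i \<in> V" using A m_def by auto
  obtain w :: nat where wV: "w \<notin> V" using ex_new_if_finite[OF infinite_UNIV_nat fV] by auto
  define vw where "vw = {v0, w}"
  have vwE: "vw \<notin> E" using EV wV vw_def by auto
  have e0vw: "e0 \<noteq> vw" using e0E vwE by auto
  define V' where "V' = insert w V"
  define E' where "E' = insert vw E"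
  define j' where "j' = (\<lambda>i. if j i = v0 then w else j i)"
  define PP where "PP = {P. partition_on {0..<m} P}"
  have fPP: "finite PP" unfolding PP_def by (rule finitely_many_partition_on) simp
  have PPfin: "finite P" "\<And>B. B \<in> P \<Longrightarrow> finite B \<and> (\<forall>i\<in>B. j i \<in> V)" if "P \<in> PP" for P
  proof -
    have pP: "partition_on {0..<m} P" using that PP_def by simp
    show "finite P" using finite_elements[OF _ pP] by simp
    fix B assume "B \<in> P"
    hence "B \<subseteq> {0..<m}" using pP by (auto simp: partition_on_def)
    thus "finite B \<and> (\<forall>i\<in>B. j i \<in> V)" using jV finite_subset by auto
  qed
  define coef where "coef P = (-1::real) ^ (card P - 1) * fact (card P - 1)" for P :: "nat set set"
  define EE where "EE s B = ising_expect V E (J(e0:=s)) (\<lambda>\<sigma>. \<Prod>i\<in>B. \<sigma> (j i))" for s B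
  define hP where "hP P s = (\<Prod>B\<in>P. EE s B)" for P s
  define CP where "CP P a = (\<Prod>B\<in>P. cfac (card {i\<in>B. j i = v0}) a)" for P a
  define x where "x = J e0"
  have hPd: "(hP P has_real_derivative deriv (hP P) x) (at x)" if P: "P \<in> PP" for P
  proof -
    have "\<forall>B\<in>P. \<exists>D. ((\<lambda>s. EE s B) has_real_derivative D) (at x)"
      unfolding EE_def using expect_diff[OF fV] by blast
    then obtain D where D: "\<And>B. B \<in> P \<Longrightarrow> ((\<lambda>s. EE s B) has_real_derivative D B) (at x)"
      by metis
    have "(hP P has_real_derivative (\<Sum>B\<in>P. D B * (\<Prod>y\<in>P-{B}. EE x y))) (at x)"
      unfolding hP_def[abs_def] by (rule has_field_derivative_prod) (rule D)
    thus ?thesis using DERIV_imp_deriv by metis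
  qed
  define DP where "DP P = deriv (hP P) x" for P
  have U1: "(\<lambda>s. ursell V E (J(e0:=s)) m j) = (\<lambda>s. \<Sum>P\<in>PP. coef P * hP P s)"
    unfolding ursell_def PP_def coef_def hP_def EE_def by simp
  have der1: "ursell_deriv V E J m j e0 = (\<Sum>P\<in>PP. coef P * DP P)"
    unfolding ursell_deriv_def U1 x_def[symmetric] DP_def
    by (rule DERIV_imp_deriv, rule DERIV_sum, rule DERIV_cmult, rule hPd)
  have U2: "(\<lambda>s. ursell V' E' ((J(vw:=a))(e0:=s)) m j') = (\<lambda>s. \<Sum>P\<in>PP. coef P * CP P a * hP P s)" for a
  proof
    fix s
    have "ursell V' E' ((J(vw:=a))(e0:=s)) m j' = (\<Sum>P\<in>PP. coef P *
       (\<Prod>B\<in>P. ising_expect V' E' ((J(vw:=a))(e0:=s)) (\<lambda>\<sigma>. \<Prod>i\<in>B. \<sigma> (j' i))))"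
      unfolding ursell_def PP_def coef_def by simp
    also have "\<dots> = (\<Sum>P\<in>PP. coef P * CP P a * hP P s)"
    proof (intro sum.cong refl)
      fix P assume P: "P \<in> PP"
      have "(\<Prod>B\<in>P. ising_expect V' E' ((J(vw:=a))(e0:=s)) (\<lambda>\<sigma>. \<Prod>i\<in>B. \<sigma> (j' i)))
          = (\<Prod>B\<in>P. cfac (card {i\<in>B. j i = v0}) a * EE s B)"
      proof (intro prod.cong refl)
        fix B assume B: "B \<in> P"
        have eq: "(J(vw:=a))(e0:=s) = (J(e0:=s))(vw:=a)" using e0vw by (simp add: fun_upd_twist)
        have X: "ising_expect V' E' ((J(e0:=s))(vw:=a)) (\<lambda>\<sigma>. \<Prod>i\<in>B. \<sigma> (j' i)) = cfac (card {i\<in>B. j i = v0}) a * EE s B"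
          unfolding V'_def E'_def j'_def vw_def EE_def
          using expect_factor[of w V v0 E "(J(e0:=s))({v0,w}:=a)" a B j] wV fV v0V EV vwE fE PPfin[OF P] B
            expect_ignore[OF vwE, of V "J(e0:=s)" a] vw_def by simp
        show "ising_expect V' E' ((J(vw:=a))(e0:=s)) (\<lambda>\<sigma>. \<Prod>i\<in>B. \<sigma> (j' i)) = cfac (card {i\<in>B. j i = v0}) a * EE s B"
          unfolding eq by (rule X)
      qed
      thus "coef P * (\<Prod>B\<in>P. ising_expect V' E' ((J(vw:=a))(e0:=s)) (\<lambda>\<sigma>. \<Prod>i\<in>B. \<sigma> (j' i))) = coef P * CP P a * hP P s"
        unfolding CP_def hP_def prod.distrib by simp
    qed
    finally show "ursell V' E' ((J(vw:=a))(e0:=s)) m j' = (\<Sum>P\<in>PP. coef P * CP P a * hP P s)" .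
  qed
  have der2: "ursell_deriv V' E' (J(vw:=a)) m j' e0 = (\<Sum>P\<in>PP. coef P * CP P a * DP P)" for a
  proof -
    have xx: "(J(vw:=a)) e0 = x" using e0vw x_def by simp
    show ?thesis
      unfolding ursell_deriv_def U2 DP_def xx
      by (intro DERIV_imp_deriv DERIV_sum DERIV_cmult hPd)
  qed
  have ineq: "(-1) ^ (k - 1) * (\<Sum>P\<in>PP. coef P * CP P a * DP P) \<ge> 0" if a: "a \<ge> 0" for a
  proof -
    have "v0 \<noteq> w" using v0V wV by auto
    hence "card {v0, w} = 2" by simp
    have fg: "finite_graph V' E'"
      using \<open>card {v0, w} = 2\<close>
      unfolding finite_graph_def V'_def E'_def vw_def using fV EV cE v0V wV by auto
    have fm: "ferromagnetic E' (J(vw:=a))"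
      using A a unfolding ferromagnetic_def E'_def by auto
    have "\<forall>i<2*k. j' i \<in> V'" using jV m_def unfolding j'_def V'_def by auto
    moreover have "v0 \<notin> j' ` {0..<2*k}" unfolding j'_def using wV v0V by auto
    moreover have "{u0, v0} \<in> E'" using e0E e0_def E'_def by auto
    ultimately have "(-1) ^ (k - 1) * ursell_deriv V' E' (J(vw:=a)) (2*k) j' {u0, v0} \<ge> 0"
      using hyp fg fm A by blast
    thus ?thesis using der2 m_def e0_def by simp
  qed
  have lim: "((\<lambda>a. (-1) ^ (k - 1) * (\<Sum>P\<in>PP. coef P * CP P a * DP P)) \<longlongrightarrow>
      (-1) ^ (k - 1) * (\<Sum>P\<in>PP. coef P * 1 * DP P)) at_top"
    unfolding CP_def
    by (intro tendsto_intros) (rule tendsto_prod[of _ _ "\<lambda>_. 1", simplified], rule cfac_lim)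
  have "(-1) ^ (k - 1) * (\<Sum>P\<in>PP. coef P * 1 * DP P) \<ge> (0::real)"
  proof (rule tendsto_lowerbound[OF lim])
    show "\<forall>\<^sub>F a in at_top. 0 \<le> (-1) ^ (k - 1) * (\<Sum>P\<in>PP. coef P * CP P a * DP P)"
      using eventually_ge_at_top[of "0::real"] by eventually_elim (rule ineq)
  qed simp
  thus "(-1) ^ (k - 1) * ursell_deriv V E J (2*k) j {u0, v0} \<ge> 0"
    using der1 m_def e0_def by simp
qed

end
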